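(* Let $G$ be a finite digraph. If $\mathrm{Pol}(G)\not\models\Sigma_M$, then $G\le T_3$.
   Context: A digraph is $(V,E)$ with $E\subseteq V^2$. A polymorphism of arity $k$ of $H$ is a homomorphism $H^k\to H$, where $H^k$ has vertex set $V^k$ and edges $((u_i),(v_i))$ with $(u_i,v_i)\in E$ for all $i$; $\mathrm{Pol}(H)$ is the set of all polymorphisms. $\mathrm{Pol}(H)\models\Sigma_M$ means there exists a ternary $f\in\mathrm{Pol}(H)$ with $f(y,y,x)=f(x,x,x)=f(x,y,y)$ for all $x,y\in V$. $T_3=(\{0,1,2\},<)$. A primitive positive formula is $\exists y_1,\dots,y_n(\psi_1\wedge\dots\wedge\psi_m)$ with each $\psi_i$ being $\bot$, $z_1=z_2$, or $E(z_1,z_2)$; a pp power of $H$ of dimension $d$ is the digraph on $V^d$ with edges $\{(u,v):\phi(u,v)\text{ holds in }H\}$ for a pp formula $\phi(x_1,\dots,x_d,y_1,\dots,y_d)$. $H\le G$ means $G$ is homomorphically equivalent (homomorphisms in both directions) to a pp power of $H$. *)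

theory Defs
  imports Main
begin

definition digraph :: "'a set \<Rightarrow> ('a \<times> 'a) set \<Rightarrow> bool" where
  "digraph V E \<longleftrightarrow> E \<subseteq> V \<times> V"

definition is_hom :: "'a set \<Rightarrow> ('a \<times> 'a) set \<Rightarrow> 'b set \<Rightarrow> ('b \<times> 'b) set \<Rightarrow> ('a \<Rightarrow> 'b) \<Rightarrow> bool" where
  "is_hom V E W F h \<longleftrightarrow> (\<forall>x\<in>V. h x \<in> W) \<and> (\<forall>x y. (x, y) \<in> E \<longrightarrow> (h x, h y) \<in> F)"

definition hom_equiv :: "'a set \<Rightarrow> ('a \<times> 'a) set \<Rightarrow> 'b set \<Rightarrow> ('b \<times> 'b) set \<Rightarrow> bool" where
  "hom_equiv V E W F \<longleftrightarrow> (\<exists>h. is_hom V E W F h) \<and> (\<exists>g. is_hom W F V E g)"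

definition ternary_pol :: "'a set \<Rightarrow> ('a \<times> 'a) set \<Rightarrow> ('a \<Rightarrow> 'a \<Rightarrow> 'a \<Rightarrow> 'a) \<Rightarrow> bool" where
  "ternary_pol V E f \<longleftrightarrow>
     (\<forall>x\<in>V. \<forall>y\<in>V. \<forall>z\<in>V. f x y z \<in> V) \<and>
     (\<forall>x1 y1 x2 y2 x3 y3. (x1, y1) \<in> E \<and> (x2, y2) \<in> E \<and> (x3, y3) \<in> E
        \<longrightarrow> (f x1 x2 x3, f y1 y2 y3) \<in> E)"

definition pol_models_SigmaM :: "'a set \<Rightarrow> ('a \<times> 'a) set \<Rightarrow> bool" where
  "pol_models_SigmaM V E \<longleftrightarrow>
     (\<exists>f. ternary_pol V E f \<and>
        (\<forall>x\<in>V. \<forall>y\<in>V. f y y x = f x x x \<and> f x x x = f x y y))"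

definition T3_V :: "nat set" where "T3_V = {0, 1, 2}"
definition T3_E :: "(nat \<times> nat) set" where "T3_E = {(i, j). i < j \<and> j \<le> 2}"

(* Variables are natural numbers: for a pp power of
   dimension d, variables 0..d-1 are x_1..x_d, d..2d-1 are y_1..y_d, and
   2d..2d+n-1 are the existentially quantified y_1..y_n of the formula. *)
datatype atom = Bot | Eq nat nat | Ed nat nat

definition atom_vars :: "atom \<Rightarrow> nat set" where
  "atom_vars a = (case a of Bot \<Rightarrow> {} | Eq i j \<Rightarrow> {i, j} | Ed i j \<Rightarrow> {i, j})"

fun atom_holds :: "('a \<times> 'a) set \<Rightarrow> (nat \<Rightarrow> 'a) \<Rightarrow> atom \<Rightarrow> bool" where
  "atom_holds E s Bot = False"
| "atom_holds E s (Eq i j) = (s i = s j)"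
| "atom_holds E s (Ed i j) = ((s i, s j) \<in> E)"

(* a pp formula with 2d free variables: number n of existential variables and a list of atoms *)
type_synonym ppf = "nat \<times> atom list"

definition ppf_wf :: "nat \<Rightarrow> ppf \<Rightarrow> bool" where
  "ppf_wf d phi \<longleftrightarrow> (\<forall>a\<in>set (snd phi). atom_vars a \<subseteq> {..<2 * d + fst phi})"

definition ppf_holds :: "'a set \<Rightarrow> ('a \<times> 'a) set \<Rightarrow> nat \<Rightarrow> ppf \<Rightarrow> 'a list \<Rightarrow> 'a list \<Rightarrow> bool" where
  "ppf_holds V E d phi u v \<longleftrightarrow>
     (\<exists>s. (\<forall>i<2 * d. s i = (u @ v) ! i) \<and>
          (\<forall>j<fst phi. s (2 * d + j) \<in> V) \<and>
          (\<forall>a\<in>set (snd phi). atom_holds E s a))"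

definition pp_power_V :: "'a set \<Rightarrow> nat \<Rightarrow> 'a list set" where
  "pp_power_V V d = {u. length u = d \<and> set u \<subseteq> V}"

definition pp_power_E :: "'a set \<Rightarrow> ('a \<times> 'a) set \<Rightarrow> nat \<Rightarrow> ppf \<Rightarrow> ('a list \<times> 'a list) set" where
  "pp_power_E V E d phi =
     {(u, v). u \<in> pp_power_V V d \<and> v \<in> pp_power_V V d \<and> ppf_holds V E d phi u v}"

definition pp_le :: "'a set \<Rightarrow> ('a \<times> 'a) set \<Rightarrow> 'b set \<Rightarrow> ('b \<times> 'b) set \<Rightarrow> bool" where
  "pp_le V E W F \<longleftrightarrow>
     (\<exists>d phi. d \<ge> 1 \<and> ppf_wf d phi \<and>
        hom_equiv (pp_power_V V d) (pp_power_E V E d phi) W F)"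

end

theory Submission
  imports Defs
begin

definition idx :: "'b list \<Rightarrow> 'b \<Rightarrow> nat" where
  "idx ts t = (SOME i. i < length ts \<and> ts ! i = t)"

lemma idx: "t \<in> set ts \<Longrightarrow> idx ts t < length ts \<and> ts ! (idx ts t) = t"
  unfolding idx_def by (rule someI_ex) (simp add: in_set_conv_nth)

lemma idx_nth: "distinct ts \<Longrightarrow> i < length ts \<Longrightarrow> idx ts (ts ! i) = i"
  by (metis idx nth_eq_iff_index_eq nth_mem)

definition phiM :: "('a \<times> 'a \<times> 'a) list \<Rightarrow> ('a \<times> 'a) list \<Rightarrow> ppf" where
  "phiM ts el = (length ts,
     [Ed (2 * length ts + idx ts (fst e1, fst e2, fst e3)) (2 * length ts + idx ts (snd e1, snd e2, snd e3)).
        e1 \<leftarrow> el, e2 \<leftarrow> el, e3 \<leftarrow> el]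
   @ [Eq (idx ts t) (2 * length ts + idx ts (fst t, fst t, fst (snd t))). t \<leftarrow> ts]
   @ [Eq (length ts + idx ts t) (2 * length ts + idx ts (fst (snd t), snd (snd t), snd (snd t))). t \<leftarrow> ts])"

lemma phiM_wf:
  assumes "set ts = V \<times> V \<times> V" "set el = E" "E \<subseteq> V \<times> V"
  shows "ppf_wf (length ts) (phiM ts el)"
proof -
  have i: "idx ts t < length ts" if "t \<in> V \<times> V \<times> V" for t
    using idx[of t ts] that assms(1) by auto
  have eV: "a \<in> V \<and> b \<in> V" if "(a, b) \<in> set el" for a b
    using that assms(2,3) by blast
  have tV: "a \<in> V \<and> b \<in> V \<and> c \<in> V" if "(a, b, c) \<in> set ts" for a b c
    using that assms(1) by blast
  have iV: "idx ts (a, b, c) < length ts" if "a \<in> V" "b \<in> V" "c \<in> V" for a b c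
    using i that by simp
  have ix3: "idx ts t < 3 * length ts" if "t \<in> set ts" for t
    using idx[OF that] by linarith
  have ix2: "idx ts t < 2 * length ts" if "t \<in> set ts" for t
    using idx[OF that] by linarith
  show ?thesis
    unfolding ppf_wf_def phiM_def fst_conv snd_conv set_append ball_Un
  proof (intro conjI)
    show "\<forall>a\<in>set [Ed (2 * length ts + idx ts (fst e1, fst e2, fst e3)) (2 * length ts + idx ts (snd e1, snd e2, snd e3)).
        e1 \<leftarrow> el, e2 \<leftarrow> el, e3 \<leftarrow> el]. atom_vars a \<subseteq> {..<2 * length ts + length ts}"
      by (clarsimp simp: atom_vars_def) (meson eV iV)
    show "\<forall>a\<in>set [Eq (idx ts t) (2 * length ts + idx ts (fst t, fst t, fst (snd t))). t \<leftarrow> ts]. atom_vars a \<subseteq> {..<2 * length ts + length ts}"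
      by (clarsimp simp: atom_vars_def ix3 ix2) (meson tV iV)
    show "\<forall>a\<in>set [Eq (length ts + idx ts t) (2 * length ts + idx ts (fst (snd t), snd (snd t), snd (snd t))). t \<leftarrow> ts]. atom_vars a \<subseteq> {..<2 * length ts + length ts}"
      by (clarsimp simp: atom_vars_def ix3 ix2) (meson tV iV)
  qed
qed

lemma phiM_fwd:
  assumes ts: "set ts = V \<times> V \<times> V" and el: "set el = E" "E \<subseteq> V \<times> V"
    and h: "ppf_holds V E (length ts) (phiM ts el) u v"
    and lu: "length u = length ts"
  shows "\<exists>k. ternary_pol V E k \<and> (\<forall>x\<in>V. \<forall>y\<in>V. \<forall>z\<in>V.
           u ! idx ts (x, y, z) = k x x y \<and> v ! idx ts (x, y, z) = k y z z)"
proof -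
  define d where "d = length ts"
  from h obtain s where s1: "\<forall>i<2*d. s i = (u @ v) ! i" and s2: "\<forall>j<d. s (2*d+j) \<in> V"
    and s3: "\<forall>a\<in>set (snd (phiM ts el)). atom_holds E s a"
    unfolding ppf_holds_def d_def by (auto simp: phiM_def)
  define k where "k x y z = s (2*d + idx ts (x, y, z))" for x y z
  have iV: "idx ts (x, y, z) < d" if "x \<in> V" "y \<in> V" "z \<in> V" for x y z
    using idx[of "(x, y, z)" ts] that ts unfolding d_def by auto
  have inV: "(x, y, z) \<in> set ts" if "x \<in> V" "y \<in> V" "z \<in> V" for x y z
    using that ts by auto
  have pol: "ternary_pol V E k"
    unfolding ternary_pol_def
  proof (intro conjI allI impI ballI)
    fix x y z assume "x \<in> V" "y \<in> V" "z \<in> V"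
    then show "k x y z \<in> V" unfolding k_def using s2 iV by blast
  next
    fix x1 y1 x2 y2 x3 y3 assume "(x1, y1) \<in> E \<and> (x2, y2) \<in> E \<and> (x3, y3) \<in> E"
    then have e: "(x1, y1) \<in> set el" "(x2, y2) \<in> set el" "(x3, y3) \<in> set el" using el by auto
    have "Ed (2 * d + idx ts (x1, x2, x3)) (2 * d + idx ts (y1, y2, y3)) \<in> set (snd (phiM ts el))"
      unfolding phiM_def d_def using e by force
    then show "(k x1 x2 x3, k y1 y2 y3) \<in> E" using s3 unfolding k_def by fastforce
  qed
  have "u ! idx ts (x, y, z) = k x x y \<and> v ! idx ts (x, y, z) = k y z z"
    if V: "x \<in> V" "y \<in> V" "z \<in> V" for x y z
  proof
    have m: "(x, y, z) \<in> set ts" using inV V .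
    have "Eq (idx ts (x, y, z)) (2 * d + idx ts (x, x, y)) \<in> set (snd (phiM ts el))"
      unfolding phiM_def d_def using m by force
    then have "s (idx ts (x, y, z)) = k x x y" using s3 unfolding k_def by fastforce
    moreover have "s (idx ts (x, y, z)) = u ! idx ts (x, y, z)"
      using s1 iV[OF V] lu unfolding d_def by (simp add: nth_append)
    ultimately show "u ! idx ts (x, y, z) = k x x y" by simp
    have "Eq (d + idx ts (x, y, z)) (2 * d + idx ts (y, z, z)) \<in> set (snd (phiM ts el))"
      unfolding phiM_def d_def using m by force
    then have "s (d + idx ts (x, y, z)) = k y z z" using s3 unfolding k_def by fastforce
    moreover have "s (d + idx ts (x, y, z)) = v ! idx ts (x, y, z)"
      using s1 iV[OF V] lu unfolding d_def by (simp add: nth_append)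
    ultimately show "v ! idx ts (x, y, z) = k y z z" by simp
  qed
  with pol show ?thesis by blast
qed

lemma phiM_bwd:
  assumes ts: "set ts = V \<times> V \<times> V" and el: "set el = E" "E \<subseteq> V \<times> V"
    and pol: "ternary_pol V E k"
  shows "ppf_holds V E (length ts) (phiM ts el)
           (map (\<lambda>(x, y, z). k x x y) ts) (map (\<lambda>(x, y, z). k y z z) ts)"
proof -
  define d where "d = length ts"
  define u where "u = map (\<lambda>(x, y, z). k x x y) ts"
  define v where "v = map (\<lambda>(x, y, z). k y z z) ts"
  define s where "s i = (if i < 2 * d then (u @ v) ! i else (case ts ! (i - 2 * d) of (x, y, z) \<Rightarrow> k x y z))" for i
  have sk: "s (2 * d + idx ts t) = (case t of (x, y, z) \<Rightarrow> k x y z)" if "t \<in> set ts" for t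
    unfolding s_def using idx[OF that] by simp
  have su: "s (idx ts t) = (case t of (x, y, z) \<Rightarrow> k x x y)" if "t \<in> set ts" for t
    unfolding s_def u_def v_def d_def using idx[OF that] by (simp add: nth_append)
  have sv: "s (d + idx ts t) = (case t of (x, y, z) \<Rightarrow> k y z z)" if "t \<in> set ts" for t
    unfolding s_def u_def v_def d_def using idx[OF that] by (simp add: nth_append)
  have inV: "(x, y, z) \<in> set ts" if "x \<in> V" "y \<in> V" "z \<in> V" for x y z
    using that ts by auto
  have p1: "\<forall>x\<in>V. \<forall>y\<in>V. \<forall>z\<in>V. k x y z \<in> V" and
       p2: "\<And>x1 y1 x2 y2 x3 y3. (x1, y1) \<in> E \<Longrightarrow> (x2, y2) \<in> E \<Longrightarrow> (x3, y3) \<in> E \<Longrightarrow> (k x1 x2 x3, k y1 y2 y3) \<in> E"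
    using pol unfolding ternary_pol_def by blast+
  have A1: "\<forall>i<2 * d. s i = (u @ v) ! i" unfolding s_def by simp
  have A2: "\<forall>j<d. s (2 * d + j) \<in> V"
  proof (intro allI impI)
    fix j assume j: "j < d"
    obtain x y z where t: "ts ! j = (x, y, z)" by (cases "ts ! j") auto
    have "(x, y, z) \<in> V \<times> V \<times> V" using nth_mem[of j ts] j t ts unfolding d_def by simp
    then show "s (2 * d + j) \<in> V" unfolding s_def using t p1 by auto
  qed
  have A3: "\<forall>a\<in>set (snd (phiM ts el)). atom_holds E s a"
    unfolding phiM_def d_def[symmetric] snd_conv set_append ball_Un
  proof (intro conjI)
    show "\<forall>a\<in>set [Ed (2 * d + idx ts (fst e1, fst e2, fst e3)) (2 * d + idx ts (snd e1, snd e2, snd e3)).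
        e1 \<leftarrow> el, e2 \<leftarrow> el, e3 \<leftarrow> el]. atom_holds E s a"
    proof (clarsimp)
      fix a1 b1 a2 b2 a3 b3 assume e: "(a1, b1) \<in> set el" "(a2, b2) \<in> set el" "(a3, b3) \<in> set el"
      then have E: "(a1, b1) \<in> E" "(a2, b2) \<in> E" "(a3, b3) \<in> E" using el by auto
      then have "(a1, a2, a3) \<in> set ts" "(b1, b2, b3) \<in> set ts" using el(2) inV by blast+
      then show "(s (2 * d + idx ts (a1, a2, a3)), s (2 * d + idx ts (b1, b2, b3))) \<in> E"
        using sk p2[OF E] by simp
    qed
    show "\<forall>a\<in>set [Eq (idx ts t) (2 * d + idx ts (fst t, fst t, fst (snd t))). t \<leftarrow> ts]. atom_holds E s a"
    proof (clarsimp)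
      fix x y z assume m: "(x, y, z) \<in> set ts"
      then have "(x, x, y) \<in> set ts" using inV ts by blast
      then show "s (idx ts (x, y, z)) = s (2 * d + idx ts (x, x, y))" using sk su m by simp
    qed
    show "\<forall>a\<in>set [Eq (d + idx ts t) (2 * d + idx ts (fst (snd t), snd (snd t), snd (snd t))). t \<leftarrow> ts]. atom_holds E s a"
    proof (clarsimp)
      fix x y z assume m: "(x, y, z) \<in> set ts"
      then have "(y, z, z) \<in> set ts" using inV ts by blast
      then show "s (d + idx ts (x, y, z)) = s (2 * d + idx ts (y, z, z))" using sk sv m by simp
    qed
  qed
  show ?thesis unfolding ppf_holds_def u_def[symmetric] v_def[symmetric] d_def[symmetric]
    using A1 A2 A3 by (intro exI[of _ s]) (simp add: phiM_def d_def)
qed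

theorem mainTheorem7:
  fixes V :: "'a set" and E :: "('a \<times> 'a) set"
  assumes "finite V" and "digraph V E"
    and "\<not> pol_models_SigmaM V E"
  shows "pp_le V E T3_V T3_E"
proof -
  have EV: "E \<subseteq> V \<times> V" using assms(2) unfolding digraph_def .
  have Vne: "V \<noteq> {}"
  proof
    assume "V = {}"
    then have "E = {}" using EV by auto
    then have "pol_models_SigmaM V E" using \<open>V = {}\<close>
      unfolding pol_models_SigmaM_def ternary_pol_def by auto
    with assms(3) show False by simp
  qed
  obtain ts where ts: "set ts = V \<times> V \<times> V" using finite_list assms(1) by (metis finite_SigmaI)
  have "finite E" using EV assms(1) finite_subset by blast
  then obtain el where el: "set el = E" using finite_list by blast
  define d where "d = length ts"
  have d1: "d \<ge> 1"
  proof -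
    obtain a where "a \<in> V" using Vne by blast
    then have "(a, a, a) \<in> set ts" using ts by simp
    then show ?thesis unfolding d_def by (cases ts) auto
  qed
  define PE where "PE = pp_power_E V E d (phiM ts el)"
  have fwd: "\<exists>k. ternary_pol V E k \<and> (\<forall>x\<in>V. \<forall>y\<in>V. \<forall>z\<in>V.
           u ! idx ts (x, y, z) = k x x y \<and> v ! idx ts (x, y, z) = k y z z)" if "(u, v) \<in> PE" for u v
    using that phiM_fwd[OF ts el EV, of u v] unfolding PE_def pp_power_E_def pp_power_V_def d_def by auto
  have nowalk: False if w: "(a, b) \<in> PE" "(b, c) \<in> PE" "(c, e) \<in> PE" for a b c e
  proof -
    obtain k1 where k1: "\<forall>x\<in>V. \<forall>y\<in>V. \<forall>z\<in>V. b ! idx ts (x, y, z) = k1 y z z"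
      using fwd[OF w(1)] by blast
    obtain k2 where k2p: "ternary_pol V E k2" and k2: "\<forall>x\<in>V. \<forall>y\<in>V. \<forall>z\<in>V.
           b ! idx ts (x, y, z) = k2 x x y \<and> c ! idx ts (x, y, z) = k2 y z z"
      using fwd[OF w(2)] by blast
    obtain k3 where k3: "\<forall>x\<in>V. \<forall>y\<in>V. \<forall>z\<in>V. c ! idx ts (x, y, z) = k3 x x y"
      using fwd[OF w(3)] by blast
    have "\<forall>x\<in>V. \<forall>y\<in>V. k2 y y x = k2 x x x \<and> k2 x x x = k2 x y y"
    proof (intro ballI conjI)
      fix x y assume xy: "x \<in> V" "y \<in> V"
      have "b ! idx ts (y, x, x) = k2 y y x" "b ! idx ts (x, x, x) = k2 x x x" using k2 xy by auto
      moreover have "b ! idx ts (y, x, x) = k1 x x x" "b ! idx ts (x, x, x) = k1 x x x" using k1 xy by auto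
      ultimately show "k2 y y x = k2 x x x" by simp
      have "c ! idx ts (x, x, y) = k2 x y y" "c ! idx ts (x, x, x) = k2 x x x" using k2 xy by auto
      moreover have "c ! idx ts (x, x, y) = k3 x x x" "c ! idx ts (x, x, x) = k3 x x x" using k3 xy by auto
      ultimately show "k2 x x x = k2 x y y" by simp
    qed
    with k2p have "pol_models_SigmaM V E" unfolding pol_models_SigmaM_def by blast
    with assms(3) show False by simp
  qed
  define h where "h u = (if \<exists>w w'. (w', w) \<in> PE \<and> (w, u) \<in> PE then 2
                          else if \<exists>w. (w, u) \<in> PE then 1 else (0::nat))" for u
  have hom1: "is_hom (pp_power_V V d) PE T3_V T3_E h"
    unfolding is_hom_def
  proof (intro conjI ballI allI impI)
    fix u show "h u \<in> T3_V" unfolding h_def T3_V_def by auto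
  next
    fix u v assume uv: "(u, v) \<in> PE"
    have hv: "h v \<ge> 1" unfolding h_def using uv by auto
    have "h u < h v"
    proof (cases "\<exists>w w'. (w', w) \<in> PE \<and> (w, u) \<in> PE")
      case True then show ?thesis using nowalk uv by blast
    next
      case False
      show ?thesis
      proof (cases "\<exists>w. (w, u) \<in> PE")
        case True
        then have "h v = 2" unfolding h_def using uv by auto
        moreover have "h u = 1" unfolding h_def using True False by auto
        ultimately show ?thesis by simp
      next
        case F2: False
        then have "h u = 0" unfolding h_def using False by auto
        with hv show ?thesis by simp
      qed
    qed
    moreover have "h v \<le> 2" unfolding h_def by auto
    ultimately show "(h u, h v) \<in> T3_E" unfolding T3_E_def by simp
  qed
  define g where "g i = map (\<lambda>(x, y, z). if i = (0::nat) then x else if i = 1 then y else z) ts" for i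
  have tV: "x \<in> V \<and> y \<in> V \<and> z \<in> V" if "(x, y, z) \<in> set ts" for x y z
    using that ts by blast
  have gV: "g i \<in> pp_power_V V d" for i
    unfolding g_def pp_power_V_def d_def
    by (clarsimp simp del: ts) (metis tV)
  have bwd: "(map (\<lambda>(x, y, z). k x x y) ts, map (\<lambda>(x, y, z). k y z z) ts) \<in> PE"
    if "ternary_pol V E k" for k
  proof -
    have "map (\<lambda>(x, y, z). k x x y) ts \<in> pp_power_V V d" "map (\<lambda>(x, y, z). k y z z) ts \<in> pp_power_V V d"
      using that unfolding pp_power_V_def d_def ternary_pol_def
      by (clarsimp simp del: ts, metis tV)+
    then show ?thesis using phiM_bwd[OF ts el EV that] unfolding PE_def pp_power_E_def d_def by auto
  qed
  have pr1: "ternary_pol V E (\<lambda>x y z. x)" "ternary_pol V E (\<lambda>x y z. y)" "ternary_pol V E (\<lambda>x y z. z)"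
    unfolding ternary_pol_def by auto
  have e01: "(g 0, g 1) \<in> PE"
  proof -
    have "map (\<lambda>(x, y, z). x) ts = g 0" "map (\<lambda>(x, y, z). y) ts = g 1" unfolding g_def by auto
    then show ?thesis using bwd[OF pr1(1)] by simp
  qed
  have e02: "(g 0, g 2) \<in> PE"
  proof -
    have "map (\<lambda>(x, y, z). x) ts = g 0" "map (\<lambda>(x, y, z). z) ts = g 2" unfolding g_def by auto
    then show ?thesis using bwd[OF pr1(2)] by simp
  qed
  have e12: "(g 1, g 2) \<in> PE"
  proof -
    have "map (\<lambda>(x, y, z). y) ts = g 1" "map (\<lambda>(x, y, z). z) ts = g 2" unfolding g_def by auto
    then show ?thesis using bwd[OF pr1(3)] by simp
  qed
  have hom2: "is_hom T3_V T3_E (pp_power_V V d) PE g"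
    unfolding is_hom_def
  proof (intro conjI ballI allI impI)
    fix i show "g i \<in> pp_power_V V d" by (rule gV)
  next
    fix i j assume "(i, j) \<in> T3_E"
    then have "(i = 0 \<and> j = 1) \<or> (i = 0 \<and> j = 2) \<or> (i = 1 \<and> j = 2)" unfolding T3_E_def by auto
    then show "(g i, g j) \<in> PE" using e01 e02 e12 by auto
  qed
  have "ppf_wf d (phiM ts el)" unfolding d_def by (rule phiM_wf[OF ts el EV])
  then show ?thesis unfolding pp_le_def hom_equiv_def using d1 hom1 hom2 PE_def by blast
qed

end
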